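(* Suppose a set $S\subseteq\mathbb{N}^{\mathbb{N}}$ is defined by some sentence $\forall x\,\exists y\,\phi$ of $\mathscr{L}_{\max}$ and also by some sentence $\exists x\,\forall y\,\psi$ of $\mathscr{L}_{\max}$, where $\phi$ and $\psi$ are quantifier-free. Then $S$ is guessable.
   Context: A function $G:\mathbb{N}^{<\mathbb{N}}\to\{0,1\}$ ($\mathbb{N}^{<\mathbb{N}}$ = finite sequences of naturals) is a guesser for $S\subseteq\mathbb{N}^{\mathbb{N}}$ if for every $f:\mathbb{N}\to\mathbb{N}$ there is $m>0$ such that for all $n>m$, $G(f(0),\ldots,f(n))$ equals $1$ if $f\in S$ and $0$ if $f\notin S$; $S$ is guessable if it has a guesser. The language $\mathscr{L}_{\max}$ is a first-order language extended with ellipses: constant symbols $\mathbf{n}$ (also $\bar n$) for each $n\in\mathbb{N}$; an $n$-ary function symbol $\tilde w$ for each $w:\mathbb{N}^n\to\mathbb{N}$ ($n>0$); an $n$-ary predicate symbol $\tilde p$ for each $p\subseteq\mathbb{N}^n$ ($n>0$); an $\mathbb{N}^{<\mathbb{N}}$-ary function symbol $\tilde G$ for each $G:\mathbb{N}^{<\mathbb{N}}\to\mathbb{N}$ (applicable to any finite number of arguments); a unary function symbol $\mathbf{f}$; and a symbol $\cdots_x$ for each variable $x$. Besides the usual terms, for $\mathbb{N}^{<\mathbb{N}}$-ary $G$, terms $u,v$ and variable $x$, $G(u(\mathbf{0}),\cdots_x,u(v))$ is a term with free variables $(FV(u)\setminus\{x\})\cup FV(v)$. Formulas are built as usual. For $f:\mathbb{N}\to\mathbb{N}$,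 $\mathscr{M}_f$ is the structure on $\mathbb{N}$ interpreting every symbol as the object it names and $\mathbf{f}$ as $f$; terms are evaluated as usual, plus $G(u(\mathbf{0}),\cdots_x,u(v))^{s}=G\big(u(x|\mathbf{0})^{s},\ldots,u(x|\overline{v^{s}})^{s}\big)$ under an assignment $s$, where $u(x|c)$ is substitution of the constant $c$ for $x$ in $u$. A sentence $\phi$ defines $S\subseteq\mathbb{N}^{\mathbb{N}}$ if for every $f:\mathbb{N}\to\mathbb{N}$, $\mathscr{M}_f\models\phi$ iff $f\in S$. *)

theory Defs
  imports Main
begin

text \<open>Fn w ts covers both the n-ary function symbols (w applied to exactly n arguments)
  and the N^{<N}-ary symbols G (applied to any finite number of arguments);
  F t is the unary symbol f; Ell G u x v is G(u(0), ..._x, u(v)).\<close>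
datatype trm =
    Var nat
  | Cst nat
  | Fn "nat list \<Rightarrow> nat" "trm list"
  | F trm
  | Ell "nat list \<Rightarrow> nat" trm nat trm

datatype fml =
    Eq trm trm
  | Pred "nat list \<Rightarrow> bool" "trm list"
  | Neg fml
  | Conj fml fml
  | Disj fml fml
  | Imp fml fml
  | All nat fml
  | Ex nat fml

fun fvt :: "trm \<Rightarrow> nat set" where
  "fvt (Var x) = {x}"
| "fvt (Cst n) = {}"
| "fvt (Fn w ts) = (\<Union>t\<in>set ts. fvt t)"
| "fvt (F t) = fvt t"
| "fvt (Ell G u x v) = (fvt u - {x}) \<union> fvt v"

fun fvf :: "fml \<Rightarrow> nat set" where
  "fvf (Eq a b) = fvt a \<union> fvt b"
| "fvf (Pred p ts) = (\<Union>t\<in>set ts. fvt t)"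
| "fvf (Neg a) = fvf a"
| "fvf (Conj a b) = fvf a \<union> fvf b"
| "fvf (Disj a b) = fvf a \<union> fvf b"
| "fvf (Imp a b) = fvf a \<union> fvf b"
| "fvf (All x a) = fvf a - {x}"
| "fvf (Ex x a) = fvf a - {x}"

fun qfree :: "fml \<Rightarrow> bool" where
  "qfree (Eq a b) = True"
| "qfree (Pred p ts) = True"
| "qfree (Neg a) = qfree a"
| "qfree (Conj a b) = (qfree a \<and> qfree b)"
| "qfree (Disj a b) = (qfree a \<and> qfree b)"
| "qfree (Imp a b) = (qfree a \<and> qfree b)"
| "qfree (All x a) = False"
| "qfree (Ex x a) = False"

text \<open>Evaluation in M_f under assignment s. Substituting the constant c for x in u
  and evaluating under s is the same as evaluating u under s(x := c).\<close>
fun evalt :: "(nat \<Rightarrow> nat) \<Rightarrow> (nat \<Rightarrow> nat) \<Rightarrow> trm \<Rightarrow> nat" where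
  "evalt f s (Var x) = s x"
| "evalt f s (Cst n) = n"
| "evalt f s (Fn w ts) = w (map (evalt f s) ts)"
| "evalt f s (F t) = f (evalt f s t)"
| "evalt f s (Ell G u x v) = G (map (\<lambda>i. evalt f (s(x := i)) u) [0..<Suc (evalt f s v)])"

fun sat :: "(nat \<Rightarrow> nat) \<Rightarrow> (nat \<Rightarrow> nat) \<Rightarrow> fml \<Rightarrow> bool" where
  "sat f s (Eq a b) = (evalt f s a = evalt f s b)"
| "sat f s (Pred p ts) = p (map (evalt f s) ts)"
| "sat f s (Neg a) = (\<not> sat f s a)"
| "sat f s (Conj a b) = (sat f s a \<and> sat f s b)"
| "sat f s (Disj a b) = (sat f s a \<or> sat f s b)"
| "sat f s (Imp a b) = (sat f s a \<longrightarrow> sat f s b)"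
| "sat f s (All x a) = (\<forall>n. sat f (s(x := n)) a)"
| "sat f s (Ex x a) = (\<exists>n. sat f (s(x := n)) a)"

definition sentence :: "fml \<Rightarrow> bool" where
  "sentence \<phi> \<longleftrightarrow> fvf \<phi> = {}"

definition defines_set :: "fml \<Rightarrow> (nat \<Rightarrow> nat) set \<Rightarrow> bool" where
  "defines_set \<phi> S \<longleftrightarrow> sentence \<phi> \<and> (\<forall>f s. sat f s \<phi> \<longleftrightarrow> f \<in> S)"

definition guesser :: "(nat list \<Rightarrow> nat) \<Rightarrow> (nat \<Rightarrow> nat) set \<Rightarrow> bool" where
  "guesser G S \<longleftrightarrow> (\<forall>\<sigma>. G \<sigma> \<in> {0, 1}) \<and>
     (\<forall>f. \<exists>m>0. \<forall>n>m. G (map f [0..<Suc n]) = (if f \<in> S then 1 else 0))"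

definition guessable :: "(nat \<Rightarrow> nat) set \<Rightarrow> bool" where
  "guessable S \<longleftrightarrow> (\<exists>G. guesser G S)"

end

theory Submission
  imports Defs
begin

lemma fin_bound:
  fixes Q :: "nat \<Rightarrow> 'a \<Rightarrow> bool"
  assumes "finite A" "\<And>x. x \<in> A \<Longrightarrow> \<exists>N. Q N x"
    and "\<And>N M x. Q N x \<Longrightarrow> N \<le> M \<Longrightarrow> Q M x"
  shows "\<exists>N. \<forall>x\<in>A. Q N x"
  using assms
proof (induction A rule: finite_induct)
  case empty then show ?case by auto
next
  case (insert a A)
  then obtain N1 where N1: "\<forall>x\<in>A. Q N1 x" by auto
  obtain N2 where N2: "Q N2 a" using insert.prems(1) by blast
  have "\<forall>x\<in>insert a A. Q (max N1 N2) x"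
  proof
    fix z assume "z \<in> insert a A"
    then show "Q (max N1 N2) z"
    proof
      assume "z = a" then show ?thesis using insert.prems(2)[OF N2 max.cobounded2] by simp
    next
      assume "z \<in> A" then show ?thesis using insert.prems(2)[of N1 z "max N1 N2"] N1 max.cobounded1 by blast
    qed
  qed
  then show ?case by blast
qed

lemma fin_bound_agree:
  fixes f :: "nat \<Rightarrow> 'c"
  assumes "finite A" "\<And>x. x \<in> A \<Longrightarrow> \<exists>N. \<forall>g. (\<forall>i<N. g i = f i) \<longrightarrow> P g x"
  shows "\<exists>N. \<forall>x\<in>A. \<forall>g. (\<forall>i<N. g i = f i) \<longrightarrow> P g x"
proof (rule fin_bound[OF assms(1), where Q="\<lambda>N x. \<forall>g. (\<forall>i<N. g i = f i) \<longrightarrow> P g x"])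
  fix x assume "x \<in> A" then show "\<exists>N. \<forall>g. (\<forall>i<N. g i = f i) \<longrightarrow> P g x" by (rule assms(2))
next
  fix N M :: nat and x
  assume a: "\<forall>g. (\<forall>i<N. g i = f i) \<longrightarrow> P g x" and b: "N \<le> M"
  show "\<forall>g. (\<forall>i<M. g i = f i) \<longrightarrow> P g x"
  proof (intro allI impI)
    fix g assume "\<forall>i<M. g i = f i"
    then have "\<forall>i<N. g i = f i" using b by simp
    then show "P g x" using a by blast
  qed
qed

lemma evalt_cont:
  "\<exists>N. \<forall>g. (\<forall>i<N. g i = f i) \<longrightarrow> evalt g s t = evalt f s t"
proof (induction t arbitrary: s)
  case (Var x) then show ?case by auto
next
  case (Cst n) then show ?case by auto
next
  case (Fn w ts)
  have "\<exists>N. \<forall>t\<in>set ts. \<forall>g. (\<forall>i<N. g i = f i) \<longrightarrow> evalt g s t = evalt f s t"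
    by (rule fin_bound_agree) (use Fn in blast)+
  then obtain N where N: "\<forall>t\<in>set ts. \<forall>g. (\<forall>i<N. g i = f i) \<longrightarrow> evalt g s t = evalt f s t"
    by blast
  show ?case
  proof (intro exI[of _ N] allI impI)
    fix g assume a: "\<forall>i<N. g i = f i"
    have "map (evalt g s) ts = map (evalt f s) ts" by (rule map_cong[OF refl]) (use N a in blast)
    then show "evalt g s (Fn w ts) = evalt f s (Fn w ts)" by (simp only: evalt.simps)
  qed
next
  case (F t)
  obtain N where N: "\<forall>g. (\<forall>i<N. g i = f i) \<longrightarrow> evalt g s t = evalt f s t" using F by blast
  show ?case
  proof (intro exI[of _ "max N (Suc (evalt f s t))"] allI impI)
    fix g assume a: "\<forall>i<max N (Suc (evalt f s t)). g i = f i"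
    have "\<forall>i<N. g i = f i" using a by simp
    then have e: "evalt g s t = evalt f s t" using N by blast
    have "g (evalt f s t) = f (evalt f s t)" using a by simp
    then show "evalt g s (F t) = evalt f s (F t)" using e by simp
  qed
next
  case (Ell G u x v)
  obtain N where N: "\<forall>g. (\<forall>i<N. g i = f i) \<longrightarrow> evalt g s v = evalt f s v" using Ell by blast
  have "\<exists>N. \<forall>j\<in>{..evalt f s v}. \<forall>g. (\<forall>i<N. g i = f i) \<longrightarrow> evalt g (s(x:=j)) u = evalt f (s(x:=j)) u"
    by (rule fin_bound_agree) (use Ell in blast)+
  then obtain N2 where N2: "\<forall>j\<in>{..evalt f s v}. \<forall>g. (\<forall>i<N2. g i = f i) \<longrightarrow> evalt g (s(x:=j)) u = evalt f (s(x:=j)) u"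
    by blast
  show ?case
  proof (intro exI[of _ "max N N2"] allI impI)
    fix g assume a: "\<forall>i<max N N2. g i = f i"
    have "\<forall>i<N. g i = f i" using a by simp
    then have e: "evalt g s v = evalt f s v" using N by blast
    have "\<forall>i<N2. g i = f i" using a by simp
    then have "\<forall>j\<in>{..evalt f s v}. evalt g (s(x:=j)) u = evalt f (s(x:=j)) u"
      using N2 by blast
    then have "map (\<lambda>i. evalt g (s(x := i)) u) [0..<Suc (evalt g s v)] = map (\<lambda>i. evalt f (s(x := i)) u) [0..<Suc (evalt f s v)]"
      unfolding e by (intro map_cong refl) (auto simp del: upt_Suc)
    then show "evalt g s (Ell G u x v) = evalt f s (Ell G u x v)"
      by (simp only: evalt.simps)
  qed
qed

lemma agree_two:
  fixes f :: "nat \<Rightarrow> 'a"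
  assumes "\<exists>N1. \<forall>g. (\<forall>i<N1. g i = f i) \<longrightarrow> P g" "\<exists>N2. \<forall>g. (\<forall>i<N2. g i = f i) \<longrightarrow> Q g"
  shows "\<exists>N. \<forall>g. (\<forall>i<N. g i = f i) \<longrightarrow> P g \<and> Q g"
proof -
  obtain N1 where N1: "\<forall>g. (\<forall>i<N1. g i = f i) \<longrightarrow> P g" using assms(1) by blast
  obtain N2 where N2: "\<forall>g. (\<forall>i<N2. g i = f i) \<longrightarrow> Q g" using assms(2) by blast
  show ?thesis
  proof (intro exI[of _ "max N1 N2"] allI impI)
    fix g assume a: "\<forall>i<max N1 N2. g i = f i"
    have "\<forall>i<N1. g i = f i" "\<forall>i<N2. g i = f i" using a by simp_all
    then show "P g \<and> Q g" using N1 N2 by blast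
  qed
qed

lemma sat_cont:
  "qfree \<phi> \<Longrightarrow> \<exists>N. \<forall>g. (\<forall>i<N. g i = f i) \<longrightarrow> sat g s \<phi> = sat f s \<phi>"
proof (induction \<phi>)
  case (Eq a b)
  have "\<exists>N. \<forall>g. (\<forall>i<N. g i = f i) \<longrightarrow> evalt g s a = evalt f s a \<and> evalt g s b = evalt f s b"
    by (rule agree_two) (rule evalt_cont)+
  then obtain N where N: "\<forall>g. (\<forall>i<N. g i = f i) \<longrightarrow> evalt g s a = evalt f s a \<and> evalt g s b = evalt f s b" by blast
  show ?case
  proof (intro exI[of _ N] allI impI)
    fix g assume "\<forall>i<N. g i = f i"
    then have "evalt g s a = evalt f s a \<and> evalt g s b = evalt f s b" using N by blast
    then show "sat g s (Eq a b) = sat f s (Eq a b)" by (simp only: sat.simps)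
  qed
next
  case (Pred p ts)
  have "\<exists>N. \<forall>t\<in>set ts. \<forall>g. (\<forall>i<N. g i = f i) \<longrightarrow> evalt g s t = evalt f s t"
    by (rule fin_bound_agree) (use evalt_cont in blast)+
  then obtain N where N: "\<forall>t\<in>set ts. \<forall>g. (\<forall>i<N. g i = f i) \<longrightarrow> evalt g s t = evalt f s t"
    by blast
  show ?case
  proof (intro exI[of _ N] allI impI)
    fix g assume a: "\<forall>i<N. g i = f i"
    have "map (evalt g s) ts = map (evalt f s) ts" by (rule map_cong[OF refl]) (use N a in blast)
    then show "sat g s (Pred p ts) = sat f s (Pred p ts)" by (simp only: sat.simps)
  qed
next
  case (Neg a)
  then obtain N where N: "\<forall>g. (\<forall>i<N. g i = f i) \<longrightarrow> sat g s a = sat f s a" by auto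
  show ?case
  proof (intro exI[of _ N] allI impI)
    fix g assume "\<forall>i<N. g i = f i"
    then have "sat g s a = sat f s a" using N by blast
    then show "sat g s (Neg a) = sat f s (Neg a)" by (simp only: sat.simps)
  qed
next
  case (Conj a b)
  then have "\<exists>N. \<forall>g. (\<forall>i<N. g i = f i) \<longrightarrow> sat g s a = sat f s a \<and> sat g s b = sat f s b"
    by (intro agree_two) auto
  then obtain N where N: "\<forall>g. (\<forall>i<N. g i = f i) \<longrightarrow> sat g s a = sat f s a \<and> sat g s b = sat f s b" by blast
  show ?case
  proof (intro exI[of _ N] allI impI)
    fix g assume "\<forall>i<N. g i = f i"
    then have "sat g s a = sat f s a \<and> sat g s b = sat f s b" using N by blast
    then show "sat g s (Conj a b) = sat f s (Conj a b)" by (simp only: sat.simps)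
  qed
next
  case (Disj a b)
  then have "\<exists>N. \<forall>g. (\<forall>i<N. g i = f i) \<longrightarrow> sat g s a = sat f s a \<and> sat g s b = sat f s b"
    by (intro agree_two) auto
  then obtain N where N: "\<forall>g. (\<forall>i<N. g i = f i) \<longrightarrow> sat g s a = sat f s a \<and> sat g s b = sat f s b" by blast
  show ?case
  proof (intro exI[of _ N] allI impI)
    fix g assume "\<forall>i<N. g i = f i"
    then have "sat g s a = sat f s a \<and> sat g s b = sat f s b" using N by blast
    then show "sat g s (Disj a b) = sat f s (Disj a b)" by (simp only: sat.simps)
  qed
next
  case (Imp a b)
  then have "\<exists>N. \<forall>g. (\<forall>i<N. g i = f i) \<longrightarrow> sat g s a = sat f s a \<and> sat g s b = sat f s b"
    by (intro agree_two) auto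
  then obtain N where N: "\<forall>g. (\<forall>i<N. g i = f i) \<longrightarrow> sat g s a = sat f s a \<and> sat g s b = sat f s b" by blast
  show ?case
  proof (intro exI[of _ N] allI impI)
    fix g assume "\<forall>i<N. g i = f i"
    then have "sat g s a = sat f s a \<and> sat g s b = sat f s b" using N by blast
    then show "sat g s (Imp a b) = sat f s (Imp a b)" by (simp only: sat.simps)
  qed
qed auto

definition refuted :: "((nat \<Rightarrow> nat) \<Rightarrow> nat \<Rightarrow> nat \<Rightarrow> bool) \<Rightarrow> nat list \<Rightarrow> nat \<Rightarrow> bool" where
  "refuted R \<sigma> e \<longleftrightarrow> (\<exists>d\<le>length \<sigma>. \<forall>g. (\<forall>i<length \<sigma>. g i = \<sigma> ! i) \<longrightarrow> \<not> R g e d)"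

lemma key:
  assumes cont: "\<And>f e d. \<exists>N. \<forall>g. (\<forall>i<N. g i = f i) \<longrightarrow> R g e d = R f e d"
    and ex: "\<forall>d. R f e0 d"
  shows "\<exists>m. \<forall>n>m. (LEAST e. \<not> refuted R (map f [0..<Suc n]) e) = (LEAST e. \<forall>d. R f e d)"
proof -
  define E where "E = (LEAST e. \<forall>d. R f e d)"
  have E: "\<forall>d. R f E d" unfolding E_def by (rule LeastI[where k=e0]) (rule ex)
  have nr: "\<not> refuted R (map f [0..<Suc n]) E" for n
  proof
    assume "refuted R (map f [0..<Suc n]) E"
    then obtain d where "\<forall>g. (\<forall>i<Suc n. g i = map f [0..<Suc n] ! i) \<longrightarrow> \<not> R g E d"
      unfolding refuted_def by auto
    moreover have "\<forall>i<Suc n. f i = map f [0..<Suc n] ! i" by (simp del: upt_Suc)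
    ultimately have "\<not> R f E d" by blast
    then show False using E by auto
  qed
  have small: "\<exists>M. \<forall>n\<ge>M. refuted R (map f [0..<Suc n]) e" if "e < E" for e
  proof -
    have "\<not> (\<forall>d. R f e d)" using not_less_Least that unfolding E_def by blast
    then obtain d where d: "\<not> R f e d" by blast
    obtain N where N: "\<forall>g. (\<forall>i<N. g i = f i) \<longrightarrow> R g e d = R f e d" using cont by blast
    show ?thesis
    proof (intro exI[of _ "N + d"] allI impI)
      fix n assume n: "N + d \<le> n"
      show "refuted R (map f [0..<Suc n]) e"
        unfolding refuted_def
      proof (intro exI[of _ d] conjI allI impI)
        show "d \<le> length (map f [0..<Suc n])" using n by simp
        fix g assume a: "\<forall>i<length (map f [0..<Suc n]). g i = map f [0..<Suc n] ! i"
        have "\<forall>i<N. g i = f i"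
        proof (intro allI impI)
          fix i assume "i < N"
          then have "i < Suc n" using n by simp
          then show "g i = f i" using a by (simp del: upt_Suc)
        qed
        then show "\<not> R g e d" using N d by blast
      qed
    qed
  qed
  have "\<exists>M. \<forall>e\<in>{..<E}. \<forall>n\<ge>M. refuted R (map f [0..<Suc n]) e"
    by (rule fin_bound) (use small in auto)
  then obtain M where M: "\<forall>e\<in>{..<E}. \<forall>n\<ge>M. refuted R (map f [0..<Suc n]) e" by blast
  show ?thesis
  proof (intro exI[of _ M] allI impI)
    fix n assume "M < n"
    then show "(LEAST e. \<not> refuted R (map f [0..<Suc n]) e) = (LEAST e. \<forall>d. R f e d)"
      unfolding E_def[symmetric]
      by (intro Least_equality) (use nr M in \<open>auto simp: not_less[symmetric]\<close>)
  qed
qed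

theorem mainTheorem8:
  fixes S :: "(nat \<Rightarrow> nat) set"
  assumes "\<exists>x y \<phi>. qfree \<phi> \<and> defines_set (All x (Ex y \<phi>)) S"
    and "\<exists>x y \<psi>. qfree \<psi> \<and> defines_set (Ex x (All y \<psi>)) S"
  shows "guessable S"
proof -
  obtain x y \<phi> where P: "qfree \<phi>" "defines_set (All x (Ex y \<phi>)) S" using assms(1) by blast
  obtain x' y' \<psi> where Q: "qfree \<psi>" "defines_set (Ex x' (All y' \<psi>)) S" using assms(2) by blast
  define s0 :: "nat \<Rightarrow> nat" where "s0 = (\<lambda>_. 0)"
  define R where "R = (\<lambda>g e d. if even e then sat g (s0(x':=e div 2, y':=d)) \<psi>
                                   else \<not> sat g (s0(x:=e div 2, y:=d)) \<phi>)"
  have Pd: "(\<forall>a. \<exists>b. sat f (s0(x:=a, y:=b)) \<phi>) \<longleftrightarrow> f \<in> S" for f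
  proof -
    have "sat f s0 (All x (Ex y \<phi>)) \<longleftrightarrow> f \<in> S" using P(2) unfolding defines_set_def by blast
    then show ?thesis by simp
  qed
  have Qd: "(\<exists>c. \<forall>d. sat f (s0(x':=c, y':=d)) \<psi>) \<longleftrightarrow> f \<in> S" for f
  proof -
    have "sat f s0 (Ex x' (All y' \<psi>)) \<longleftrightarrow> f \<in> S" using Q(2) unfolding defines_set_def by blast
    then show ?thesis by simp
  qed
  have cont: "\<exists>N. \<forall>g. (\<forall>i<N. g i = f i) \<longrightarrow> R g e d = R f e d" for f e d
  proof (cases "even e")
    case True
    obtain N where "\<forall>g. (\<forall>i<N. g i = f i) \<longrightarrow> sat g (s0(x':=e div 2, y':=d)) \<psi> = sat f (s0(x':=e div 2, y':=d)) \<psi>"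
      using sat_cont[OF Q(1)] by blast
    then have N: "\<forall>g. (\<forall>i<N. g i = f i) \<longrightarrow> sat g (s0(x':=e div 2, y':=d)) \<psi> = sat f (s0(x':=e div 2, y':=d)) \<psi>" .
    show ?thesis
    proof (intro exI[of _ N] allI impI)
      fix g assume "\<forall>i<N. g i = f i"
      then have "sat g (s0(x':=e div 2, y':=d)) \<psi> = sat f (s0(x':=e div 2, y':=d)) \<psi>" using N by blast
      then show "R g e d = R f e d" unfolding R_def using True by simp
    qed
  next
    case False
    obtain N where "\<forall>g. (\<forall>i<N. g i = f i) \<longrightarrow> sat g (s0(x:=e div 2, y:=d)) \<phi> = sat f (s0(x:=e div 2, y:=d)) \<phi>"
      using sat_cont[OF P(1)] by blast
    then have N: "\<forall>g. (\<forall>i<N. g i = f i) \<longrightarrow> sat g (s0(x:=e div 2, y:=d)) \<phi> = sat f (s0(x:=e div 2, y:=d)) \<phi>" .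
    show ?thesis
    proof (intro exI[of _ N] allI impI)
      fix g assume "\<forall>i<N. g i = f i"
      then have "sat g (s0(x:=e div 2, y:=d)) \<phi> = sat f (s0(x:=e div 2, y:=d)) \<phi>" using N by blast
      then show "R g e d = R f e d" unfolding R_def using False by simp
    qed
  qed
  define G where "G = (\<lambda>\<sigma>. if even (LEAST e. \<not> refuted R \<sigma> e) then 1 else (0::nat))"
  have "guesser G S"
    unfolding guesser_def
  proof (intro conjI allI)
    fix \<sigma> show "G \<sigma> \<in> {0, 1}" unfolding G_def by auto
  next
    fix f
    have "\<exists>e0. \<forall>d. R f e0 d"
    proof (cases "f \<in> S")
      case True
      then obtain c where "\<forall>d. sat f (s0(x':=c, y':=d)) \<psi>" using Qd by blast
      then have "\<forall>d. R f (2*c) d" unfolding R_def by auto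
      then show ?thesis by blast
    next
      case False
      then obtain a where "\<forall>b. \<not> sat f (s0(x:=a, y:=b)) \<phi>" using Pd by blast
      then have "\<forall>d. R f (2*a+1) d" unfolding R_def by auto
      then show ?thesis by blast
    qed
    then obtain e0 where e0: "\<forall>d. R f e0 d" by blast
    define E where "E = (LEAST e. \<forall>d. R f e d)"
    have E: "\<forall>d. R f E d" unfolding E_def by (rule LeastI[where k=e0]) (rule e0)
    obtain m where m: "\<forall>n>m. (LEAST e. \<not> refuted R (map f [0..<Suc n]) e) = E"
      using key[of R f e0, OF cont e0] unfolding E_def by blast
    have corr: "(if even E then 1 else (0::nat)) = (if f \<in> S then 1 else 0)"
    proof (cases "even E")
      case True
      then have "\<forall>d. sat f (s0(x':=E div 2, y':=d)) \<psi>" using E unfolding R_def by auto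
      then have "f \<in> S" using Qd by blast
      then show ?thesis using True by auto
    next
      case False
      then have "\<forall>b. \<not> sat f (s0(x:=E div 2, y:=b)) \<phi>" using E unfolding R_def by auto
      then have "f \<notin> S" using Pd by blast
      then show ?thesis using False by auto
    qed
    show "\<exists>m>0. \<forall>n>m. G (map f [0..<Suc n]) = (if f \<in> S then 1 else 0)"
      by (intro exI[of _ "Suc m"] conjI) (use m corr in \<open>auto simp: G_def simp del: upt_Suc\<close>)
  qed
  then show ?thesis unfolding guessable_def by blast
qed

end
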